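(* Let $G$ be a finite graph and $K$ a maximal clique of $G$. Then $\log_2(\log_2(|\widetilde{K}|))\le\rho(K,N(K))$.
   Context: Two vertices are equivalent if they lie in exactly the same maximal cliques of $G$; $\widetilde{K}$ is the set of equivalence classes intersecting $K$. $N(K)$ is the set of vertices outside $K$ with a neighbour in $K$. For disjoint $X,Y\subseteq V(G)$, the local cutrank $\rho(X,Y)$ is the rank over $\mathbb{F}_2$ of the submatrix of the adjacency matrix of $G$ with rows indexed by $X$ and columns indexed by $Y$. *)

theory Defs
  imports Complex_Main "HOL-Library.Z2"
begin

text \<open>A finite simple graph is a finite vertex set V with a symmetric, irreflexive
  adjacency relation E (only its restriction to V matters).\<close>

definition simple_graph :: "'a set \<Rightarrow> ('a \<Rightarrow> 'a \<Rightarrow> bool) \<Rightarrow> bool" where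
  "simple_graph V E \<longleftrightarrow> finite V \<and> (\<forall>x y. E x y \<longrightarrow> E y x) \<and> (\<forall>x. \<not> E x x)"

definition clique :: "'a set \<Rightarrow> ('a \<Rightarrow> 'a \<Rightarrow> bool) \<Rightarrow> 'a set \<Rightarrow> bool" where
  "clique V E K \<longleftrightarrow> K \<subseteq> V \<and> (\<forall>x\<in>K. \<forall>y\<in>K. x \<noteq> y \<longrightarrow> E x y)"

definition maximal_clique :: "'a set \<Rightarrow> ('a \<Rightarrow> 'a \<Rightarrow> bool) \<Rightarrow> 'a set \<Rightarrow> bool" where
  "maximal_clique V E K \<longleftrightarrow> clique V E K \<and> (\<forall>K'. clique V E K' \<and> K \<subseteq> K' \<longrightarrow> K' = K)"

definition cliques_of :: "'a set \<Rightarrow> ('a \<Rightarrow> 'a \<Rightarrow> bool) \<Rightarrow> 'a \<Rightarrow> 'a set set" where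
  "cliques_of V E v = {K. maximal_clique V E K \<and> v \<in> K}"

definition eq_class :: "'a set \<Rightarrow> ('a \<Rightarrow> 'a \<Rightarrow> bool) \<Rightarrow> 'a \<Rightarrow> 'a set" where
  "eq_class V E v = {u \<in> V. cliques_of V E u = cliques_of V E v}"

text \<open>K-tilde: the set of equivalence classes intersecting K.\<close>
definition classes_meeting :: "'a set \<Rightarrow> ('a \<Rightarrow> 'a \<Rightarrow> bool) \<Rightarrow> 'a set \<Rightarrow> 'a set set" where
  "classes_meeting V E K = {C. \<exists>v\<in>V. C = eq_class V E v \<and> C \<inter> K \<noteq> {}}"

definition nbhd :: "'a set \<Rightarrow> ('a \<Rightarrow> 'a \<Rightarrow> bool) \<Rightarrow> 'a set \<Rightarrow> 'a set" where
  "nbhd V E K = {v \<in> V - K. \<exists>u\<in>K. E u v}"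

text \<open>Rows indexed by S are linearly independent over GF(2) in the X-by-Y submatrix
  of the adjacency matrix (entries of type bit = GF(2)).\<close>
definition rows_indep :: "('a \<Rightarrow> 'a \<Rightarrow> bool) \<Rightarrow> 'a set \<Rightarrow> 'a set \<Rightarrow> bool" where
  "rows_indep E Y S \<longleftrightarrow>
     (\<forall>c :: 'a \<Rightarrow> bit. (\<forall>y\<in>Y. (\<Sum>x\<in>S. c x * of_bool (E x y)) = 0) \<longrightarrow> (\<forall>x\<in>S. c x = 0))"

text \<open>Local cut-rank rho(X,Y): the GF(2)-rank (row rank) of the adjacency submatrix
  with rows X and columns Y.\<close>
definition cutrank :: "('a \<Rightarrow> 'a \<Rightarrow> bool) \<Rightarrow> 'a set \<Rightarrow> 'a set \<Rightarrow> nat" where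
  "cutrank E X Y = Max {card S | S. S \<subseteq> X \<and> rows_indep E Y S}"

end

theory Submission
  imports Defs
begin

lemma loglog_bound:
  fixes c r :: nat
  assumes "c \<le> 2 ^ r"
  shows "log 2 (log 2 (real c)) \<le> real r"
proof (cases "c = 0")
  case True then show ?thesis by (simp add: log_def)
next
  case False
  have c2: "real c \<le> 2 powr real r"
    using assms by (simp add: powr_realpow)
  have L: "log 2 (real c) \<le> real r"
    using False c2 by (simp add: log_le_iff)
  have L0: "0 \<le> log 2 (real c)" using False by simp
  show ?thesis
  proof (cases "log 2 (real c) = 0")
    case True then show ?thesis by (simp add: log_def)
  next
    case F: False
    have "real r \<le> 2 powr real r"
    proof -
      have "r < 2 ^ r" by (rule less_exp)
      then have "real r \<le> real (2 ^ r)" by linarith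
      then show ?thesis by (simp add: powr_realpow)
    qed
    then have "log 2 (real c) \<le> 2 powr real r" using L by linarith
    then show ?thesis using F L0 by (simp add: log_le_iff)
  qed
qed

lemma twins:
  assumes G: "simple_graph V E" and K: "maximal_clique V E K"
    and x: "x \<in> K" and x': "x' \<in> K"
    and same: "\<forall>y\<in>nbhd V E K. E x y = E x' y"
  shows "cliques_of V E x \<subseteq> cliques_of V E x'"
proof
  fix C assume "C \<in> cliques_of V E x"
  then have C: "maximal_clique V E C" and xC: "x \<in> C" by (auto simp: cliques_of_def)
  have sym: "\<And>a b. E a b \<Longrightarrow> E b a" using G by (auto simp: simple_graph_def)
  have KV: "K \<subseteq> V" and Kc: "\<forall>a\<in>K. \<forall>b\<in>K. a \<noteq> b \<longrightarrow> E a b"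
    using K by (auto simp: maximal_clique_def clique_def)
  have CV: "C \<subseteq> V" and Cc: "\<forall>a\<in>C. \<forall>b\<in>C. a \<noteq> b \<longrightarrow> E a b"
    using C by (auto simp: maximal_clique_def clique_def)
  have adj: "E z x'" if "z \<in> C" "z \<noteq> x'" for z
  proof (cases "z = x")
    case True then show ?thesis using Kc x x' that by auto
  next
    case False
    then have Exz: "E x z" using Cc xC that by auto
    show ?thesis
    proof (cases "z \<in> K")
      case True then show ?thesis using Kc x' that by auto
    next
      case False
      then have "z \<in> nbhd V E K" using Exz x CV that by (auto simp: nbhd_def)
      then have "E x' z" using same Exz by auto
      then show ?thesis by (rule sym)
    qed
  qed
  have "clique V E (insert x' C)"
    unfolding clique_def using CV KV x' Cc adj sym by auto
  then have "insert x' C = C" using C by (auto simp: maximal_clique_def)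
  then show "C \<in> cliques_of V E x'" using C by (auto simp: cliques_of_def)
qed

lemma classes_sub:
  assumes "K \<subseteq> V"
  shows "classes_meeting V E K \<subseteq> eq_class V E ` K"
proof
  fix C assume "C \<in> classes_meeting V E K"
  then obtain v u where v: "v \<in> V" "C = eq_class V E v" and u: "u \<in> C" "u \<in> K"
    by (auto simp: classes_meeting_def)
  then have "cliques_of V E u = cliques_of V E v" by (auto simp: eq_class_def)
  then have "eq_class V E u = eq_class V E v" by (auto simp: eq_class_def)
  then show "C \<in> eq_class V E ` K" using v u by auto
qed

lemma ofb: "((of_bool P :: bit) = of_bool Q) \<longleftrightarrow> (P = Q)"
  by (cases P; cases Q) auto

lemma bit_cases_mult: "(c::bit) * e = (if c = 1 then e else 0)"
  by (cases c) auto

lemma span: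
  assumes fin: "finite K" and SK: "S \<subseteq> K" and ind: "rows_indep E Y S"
    and maxS: "\<And>S'. S' \<subseteq> K \<Longrightarrow> rows_indep E Y S' \<Longrightarrow> card S' \<le> card S"
    and x: "x \<in> K"
  shows "\<exists>T\<subseteq>S. \<forall>y\<in>Y. (of_bool (E x y) :: bit) = (\<Sum>s\<in>T. of_bool (E s y))"
proof (cases "x \<in> S")
  case True
  then show ?thesis by (intro exI[of _ "{x}"]) auto
next
  case False
  have finS: "finite S" using fin SK finite_subset by auto
  have "card (insert x S) > card S" using False finS by simp
  then have "\<not> rows_indep E Y (insert x S)" using maxS[of "insert x S"] SK x by fastforce
  then obtain c :: "'a \<Rightarrow> bit" where c0: "\<forall>y\<in>Y. (\<Sum>z\<in>insert x S. c z * of_bool (E z y)) = 0"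
    and nz: "\<exists>z\<in>insert x S. c z \<noteq> 0"
    unfolding rows_indep_def by blast
  have eq: "\<forall>y\<in>Y. c x * of_bool (E x y) + (\<Sum>z\<in>S. c z * of_bool (E z y)) = 0"
    using c0 by (simp only: sum.insert[OF finS False])
  have cx: "c x = 1"
  proof (rule ccontr)
    assume "c x \<noteq> 1"
    then have "c x = 0" by (cases "c x") auto
    then have "\<forall>y\<in>Y. (\<Sum>z\<in>S. c z * of_bool (E z y)) = 0" using eq by simp
    then have "\<forall>z\<in>S. c z = 0" using ind unfolding rows_indep_def by blast
    then show False using nz \<open>c x = 0\<close> by auto
  qed
  have row: "\<forall>y\<in>Y. (of_bool (E x y) :: bit) = (\<Sum>z\<in>S. c z * of_bool (E z y))"
  proof
    fix y assume "y \<in> Y"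
    then have h: "of_bool (E x y) + (\<Sum>z\<in>S. c z * of_bool (E z y)) = (0::bit)"
      using eq cx by simp
    have "(a::bit) + b = 0 \<Longrightarrow> a = b" for a b by (cases a; cases b) auto
    then show "(of_bool (E x y) :: bit) = (\<Sum>z\<in>S. c z * of_bool (E z y))" using h by blast
  qed
  show ?thesis
  proof (intro exI[of _ "{z\<in>S. c z = 1}"] conjI ballI)
    show "{z\<in>S. c z = 1} \<subseteq> S" by auto
    fix y assume "y \<in> Y"
    have "(\<Sum>z\<in>{z\<in>S. c z = 1}. (of_bool (E z y) :: bit)) = (\<Sum>z\<in>S. c z * of_bool (E z y))"
      using finS apply (simp add: sum.inter_filter bit_cases_mult)
      by (rule arg_cong[where f="\<lambda>A. of_nat (card A)"]) auto
    then show "(of_bool (E x y) :: bit) = (\<Sum>z\<in>{z\<in>S. c z = 1}. of_bool (E z y))"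
      using row \<open>y \<in> Y\<close> by simp
  qed
qed

theorem corollary7p3:
  fixes V :: "'a set" and E :: "'a \<Rightarrow> 'a \<Rightarrow> bool" and K :: "'a set"
  assumes "simple_graph V E"
    and "maximal_clique V E K"
  shows "log 2 (log 2 (real (card (classes_meeting V E K)))) \<le> real (cutrank E K (nbhd V E K))"
proof -
  let ?Y = "nbhd V E K"
  have KV: "K \<subseteq> V" using assms(2) by (auto simp: maximal_clique_def clique_def)
  have finV: "finite V" using assms(1) by (auto simp: simple_graph_def)
  have finK: "finite K" using KV finV finite_subset by auto
  let ?A = "{card S |S. S \<subseteq> K \<and> rows_indep E ?Y S}"
  have finA: "finite ?A"
  proof (rule finite_subset[of _ "{..card K}"])
    show "?A \<subseteq> {..card K}" using finK card_mono by fastforce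
  qed simp
  have neA: "?A \<noteq> {}"
  proof -
    have "rows_indep E ?Y {}" by (simp add: rows_indep_def)
    then show ?thesis by blast
  qed
  have "cutrank E K ?Y \<in> ?A" unfolding cutrank_def using finA neA by (rule Max_in)
  then obtain S where SK: "S \<subseteq> K" and ind: "rows_indep E ?Y S"
    and cS: "card S = cutrank E K ?Y" by auto
  have maxS: "card S' \<le> card S" if "S' \<subseteq> K" "rows_indep E ?Y S'" for S'
  proof -
    have "card S' \<in> ?A" using that by blast
    then show ?thesis unfolding cS cutrank_def using finA by simp
  qed
  define g where "g x = (SOME T. T \<subseteq> S \<and> (\<forall>y\<in>?Y. (of_bool (E x y) :: bit) = (\<Sum>s\<in>T. of_bool (E s y))))" for x
  have g: "g x \<subseteq> S \<and> (\<forall>y\<in>?Y. (of_bool (E x y) :: bit) = (\<Sum>s\<in>g x. of_bool (E s y)))" if "x \<in> K" for x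
    unfolding g_def using span[OF finK SK ind maxS that] by (rule someI_ex)
  have geq: "eq_class V E x = eq_class V E x'" if "x \<in> K" "x' \<in> K" "g x = g x'" for x x'
  proof -
    have "\<forall>y\<in>?Y. (of_bool (E x y) :: bit) = of_bool (E x' y)" using g[OF that(1)] g[OF that(2)] that(3) by simp
    then have "\<forall>y\<in>?Y. E x y = E x' y" using ofb by blast
    have "cliques_of V E x = cliques_of V E x'"
    proof (rule equalityI)
      show "cliques_of V E x \<subseteq> cliques_of V E x'"
        by (rule twins[OF assms that(1,2)]) (use \<open>\<forall>y\<in>?Y. E x y = E x' y\<close> in blast)
      show "cliques_of V E x' \<subseteq> cliques_of V E x"
        by (rule twins[OF assms that(2,1)]) (use \<open>\<forall>y\<in>?Y. E x y = E x' y\<close> in blast)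
    qed
    then show ?thesis by (simp add: eq_class_def)
  qed
  define h where "h T = eq_class V E (SOME x. x \<in> K \<and> g x = T)" for T
  have "eq_class V E ` K = h ` (g ` K)"
  proof (rule set_eqI, rule iffI)
    fix C assume "C \<in> eq_class V E ` K"
    then obtain x where x: "x \<in> K" "C = eq_class V E x" by auto
    define z where "z = (SOME z. z \<in> K \<and> g z = g x)"
    have z: "z \<in> K \<and> g z = g x"
      unfolding z_def using x by (intro someI[of "\<lambda>z. z \<in> K \<and> g z = g x" x]) simp
    have "h (g x) = eq_class V E z" unfolding h_def z_def ..
    also have "\<dots> = C" using geq[of z x] z x by simp
    finally have "h (g x) = C" .
    then show "C \<in> h ` (g ` K)" using x by auto
  next
    fix C assume "C \<in> h ` (g ` K)"
    then obtain x where x: "x \<in> K" "C = h (g x)" by auto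
    define z where "z = (SOME z. z \<in> K \<and> g z = g x)"
    have z: "z \<in> K \<and> g z = g x"
      unfolding z_def using x by (intro someI[of "\<lambda>z. z \<in> K \<and> g z = g x" x]) simp
    have "h (g x) = eq_class V E z" unfolding h_def z_def ..
    then show "C \<in> eq_class V E ` K" using x z by simp
  qed
  then have "card (eq_class V E ` K) \<le> card (g ` K)" by (simp add: card_image_le finK)
  also have "\<dots> \<le> card (Pow S)"
  proof (rule card_mono)
    show "finite (Pow S)" using SK finK finite_subset by auto
    show "g ` K \<subseteq> Pow S" using g by auto
  qed
  also have "\<dots> = 2 ^ card S" using SK finK finite_subset card_Pow by metis
  finally have le1: "card (eq_class V E ` K) \<le> 2 ^ card S" .
  have "card (classes_meeting V E K) \<le> card (eq_class V E ` K)"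
    by (rule card_mono[OF _ classes_sub[OF KV]]) (simp add: finK)
  then have "card (classes_meeting V E K) \<le> 2 ^ card S" using le1 by linarith
  then show ?thesis using loglog_bound[of _ "card S"] cS by simp
qed

end
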